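(* Let $\boldsymbol{S}\in\mathrm{Mat}(M,M,\mathbb{C})$ be invertible, $\boldsymbol{U}\in\mathrm{Mat}(m,M,\mathbb{C})$, $\boldsymbol{V}\in\mathrm{Mat}(M,m,\mathbb{C})$, $\boldsymbol{T}\in\mathrm{Mat}(M,M,\mathbb{C})$ invertible, and suppose the Sylvester equation $\boldsymbol{S}\boldsymbol{K}+\boldsymbol{K}\boldsymbol{S}=\boldsymbol{V}\boldsymbol{U}$ has a solution. Let $\boldsymbol{\Xi}=e^{-\boldsymbol{S}x-\boldsymbol{S}^{-1}y}$ with $x,y$ real, and for a solution $\boldsymbol{K}$ and $p_0\in\mathrm{Mat}(m,m,\mathbb{C})$ define $$q=\boldsymbol{U}\boldsymbol{\Xi}\,(\boldsymbol{I}_M+(\boldsymbol{K}\boldsymbol{\Xi})^2)^{-1}\boldsymbol{V},\qquad p=p_0-\boldsymbol{U}\boldsymbol{\Xi}\boldsymbol{K}\boldsymbol{\Xi}\,(\boldsymbol{I}_M+(\boldsymbol{K}\boldsymbol{\Xi})^2)^{-1}\boldsymbol{V}$$ wherever the inverse exists. (1) If $\boldsymbol{T}^\dagger=\boldsymbol{T}$, $\boldsymbol{S}^\dagger=\boldsymbol{T}\boldsymbol{S}\boldsymbol{T}^{-1}$ and $\boldsymbol{U}=\boldsymbol{V}^\dagger\boldsymbol{T}$, then the Sylvester equation has a solution $\boldsymbol{K}$ with $\boldsymbol{K}^\dagger=\boldsymbol{T}\boldsymbol{K}\boldsymbol{T}^{-1}$, and for any such $\boldsymbol{K}$ and any Hermitian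 $p_0$, the matrices $q$ and $p$ are Hermitian ($q^\dagger=q$, $p^\dagger=p$), so that they solve the Hermitian reduction of the system $p_{xy}=(q^2)_y$, $q_{xy}=q-p_yq-qp_y$. (2) If $\bar{\boldsymbol{T}}=\boldsymbol{T}^{-1}$, $\bar{\boldsymbol{S}}=\boldsymbol{T}\boldsymbol{S}\boldsymbol{T}^{-1}$, $\bar{\boldsymbol{U}}=\boldsymbol{U}\boldsymbol{T}^{-1}$ and $\bar{\boldsymbol{V}}=\boldsymbol{T}\boldsymbol{V}$, then the Sylvester equation has a solution $\boldsymbol{K}$ with $\bar{\boldsymbol{K}}=\boldsymbol{T}\boldsymbol{K}\boldsymbol{T}^{-1}$, and for any such $\boldsymbol{K}$ and any real $p_0$ ($\bar p_0=p_0$), one has $\bar q=q$ and $\bar p=p$, so that $q,p$ solve the complex conjugation (real) reduction of the system $p_{xy}=(q^2)_y$, $q_{xy}=q-p_yq-qp_y$.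
   Context: ${}^\dagger$ denotes the conjugate transpose and a bar denotes entrywise complex conjugation; $\boldsymbol{I}_M$ is the $M\times M$ identity matrix; $e^{(\cdot)}$ is the matrix exponential; subscripts denote partial derivatives. *)

theory Defs
  imports "HOL-Analysis.Analysis"
begin

text \<open>Matrices are rendered as complex^'c^'r (r rows, c columns); ** is the matrix product.\<close>

primrec mat_pow :: "complex^'n^'n \<Rightarrow> nat \<Rightarrow> complex^'n^'n" where
  "mat_pow A 0 = mat 1"
| "mat_pow A (Suc k) = A ** mat_pow A k"

definition mat_exp :: "complex^'n^'n \<Rightarrow> complex^'n^'n" where
  "mat_exp A = (\<Sum>k. (1 / fact k) *\<^sub>R mat_pow A k)"

definition mconj :: "complex^'c^'r \<Rightarrow> complex^'c^'r" where
  "mconj A = map_matrix cnj A"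

definition adjoint :: "complex^'c^'r \<Rightarrow> complex^'r^'c" where
  "adjoint A = transpose (map_matrix cnj A)"

definition Xi :: "complex^'M^'M \<Rightarrow> real \<Rightarrow> real \<Rightarrow> complex^'M^'M" where
  "Xi S x y = mat_exp (- (x *\<^sub>R S) - (y *\<^sub>R matrix_inv S))"

definition qsol :: "complex^'M^'M \<Rightarrow> complex^'M^'m \<Rightarrow> complex^'m^'M \<Rightarrow> complex^'M^'M
    \<Rightarrow> real \<Rightarrow> real \<Rightarrow> complex^'m^'m" where
  "qsol S U V K x y =
     U ** Xi S x y ** matrix_inv (mat 1 + (K ** Xi S x y) ** (K ** Xi S x y)) ** V"

definition psol :: "complex^'m^'m \<Rightarrow> complex^'M^'M \<Rightarrow> complex^'M^'m \<Rightarrow> complex^'m^'M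
    \<Rightarrow> complex^'M^'M \<Rightarrow> real \<Rightarrow> real \<Rightarrow> complex^'m^'m" where
  "psol p0 S U V K x y =
     p0 - U ** Xi S x y ** K ** Xi S x y
        ** matrix_inv (mat 1 + (K ** Xi S x y) ** (K ** Xi S x y)) ** V"

end

theory Submission
  imports Defs
begin

lemma inv_props:
  fixes A :: "'a::field^'n^'n"
  assumes "invertible A"
  shows "A ** matrix_inv A = mat 1" "matrix_inv A ** A = mat 1"
  using someI_ex[OF assms[unfolded invertible_def]] unfolding matrix_inv_def by auto

lemma inv_unique:
  fixes A B :: "'a::field^'n^'n"
  assumes "B ** A = mat 1"
  shows "matrix_inv A = B"
proof -
  have i: "invertible A" using assms invertible_left_inverse by blast
  have "B = B ** (A ** matrix_inv A)" using inv_props[OF i] by simp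
  also have "\<dots> = matrix_inv A" by (simp add: matrix_mul_assoc assms)
  finally show ?thesis by simp
qed

lemma mconj_mult: "mconj (A ** B) = mconj A ** mconj (B::complex^'k^'n)"
  by (simp add: mconj_def vec_eq_iff matrix_matrix_mult_def)

lemma mconj_add: "mconj (A + B) = mconj A + mconj B"
  by (simp add: mconj_def vec_eq_iff)
lemma mconj_diff: "mconj (A - B) = mconj A - mconj B"
  by (simp add: mconj_def vec_eq_iff)
lemma mconj_minus: "mconj (- B) = - mconj B"
  by (simp add: mconj_def vec_eq_iff)
lemma mconj_scaleR: "mconj (r *\<^sub>R B) = r *\<^sub>R mconj B"
  by (simp add: mconj_def vec_eq_iff)
lemma mconj_mat1: "mconj (mat 1) = mat 1"
  by (simp add: mconj_def vec_eq_iff mat_def)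
lemma mconj_mconj: "mconj (mconj A) = A"
  by (simp add: mconj_def vec_eq_iff)

lemma adj_mult: "adjoint (A ** B) = adjoint B ** adjoint (A::complex^'k^'n)"
  by (simp add: adjoint_def vec_eq_iff matrix_matrix_mult_def transpose_def mult.commute)
lemma adj_add: "adjoint (A + B) = adjoint A + adjoint B"
  by (simp add: adjoint_def vec_eq_iff transpose_def)
lemma adj_diff: "adjoint (A - B) = adjoint A - adjoint B"
  by (simp add: adjoint_def vec_eq_iff transpose_def)
lemma adj_minus: "adjoint (- B) = - adjoint B"
  by (simp add: adjoint_def vec_eq_iff transpose_def)
lemma adj_scaleR: "adjoint (r *\<^sub>R B) = r *\<^sub>R adjoint B"
  by (simp add: adjoint_def vec_eq_iff transpose_def)
lemma adj_mat1: "adjoint (mat 1) = mat 1"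
  by (simp add: adjoint_def vec_eq_iff mat_def transpose_def)
lemma adj_adj: "adjoint (adjoint A) = A"
  by (simp add: adjoint_def vec_eq_iff transpose_def)

lemma linear_mconj: "linear (mconj :: complex^'k^'n \<Rightarrow> _)"
  by (rule linearI) (simp_all add: mconj_add mconj_scaleR)
lemma linear_adj: "linear (adjoint :: complex^'k^'n \<Rightarrow> _)"
  by (rule linearI) (simp_all add: adj_add adj_scaleR)

lemma pow_comm: "mat_pow A k ** A = A ** mat_pow A k"
  by (induction k) (simp_all add: matrix_mul_assoc[symmetric])

lemma mconj_pow: "mconj (mat_pow A k) = mat_pow (mconj A) k"
  by (induction k) (simp_all add: mconj_mult mconj_mat1)

lemma adj_pow: "adjoint (mat_pow A k) = mat_pow (adjoint A) k"
proof (induction k)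
  case 0 then show ?case by (simp add: adj_mat1)
next
  case (Suc k)
  have "adjoint (mat_pow A (Suc k)) = adjoint (mat_pow A k ** A)" by (simp add: pow_comm)
  also have "\<dots> = mat_pow (adjoint A) (Suc k)" by (simp add: adj_mult Suc)
  finally show ?case .
qed

lemma sim_pow:
  fixes T Ti A :: "complex^'n^'n"
  assumes "Ti ** T = mat 1"
  shows "T ** mat_pow A k ** Ti = mat_pow (T ** A ** Ti) k"
proof (induction k)
  case 0 then show ?case using assms matrix_left_right_inverse by (simp) blast
next
  case (Suc k)
  have "T ** mat_pow A (Suc k) ** Ti = (T ** A ** Ti) ** (T ** mat_pow A k ** Ti)"
    by (simp add: matrix_mul_assoc assms) (simp add: matrix_mul_assoc[symmetric] assms)
  then show ?case by (simp add: Suc)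
qed

definition mu :: "complex^'n^'n \<Rightarrow> real" where
  "mu A = (\<Sum>i\<in>UNIV. \<Sum>j\<in>UNIV. norm (A$i$j))"

lemma mu_nonneg: "0 \<le> mu A"
  unfolding mu_def by (intro sum_nonneg) auto

lemma norm_vec_le_sum: "norm (x::'a::real_normed_vector^'n) \<le> (\<Sum>i\<in>UNIV. norm (x$i))"
  unfolding norm_vec_def by (rule L2_set_le_sum) auto

lemma norm_le_mu: "norm A \<le> mu A"
proof -
  have "norm A \<le> (\<Sum>i\<in>UNIV. norm (A$i))" by (rule norm_vec_le_sum)
  also have "\<dots> \<le> mu A" unfolding mu_def
    by (intro sum_mono norm_vec_le_sum)
  finally show ?thesis .
qed

lemma mu_mult: "mu (A ** B) \<le> mu A * mu B"
proof -
  have "mu (A ** B) \<le> (\<Sum>i\<in>UNIV. \<Sum>j\<in>UNIV. \<Sum>k\<in>UNIV. norm (A$i$k) * norm (B$k$j))"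
    unfolding mu_def matrix_matrix_mult_def
  proof (intro sum_mono)
    fix i j
    have "norm (\<Sum>k\<in>UNIV. A$i$k * B$k$j) \<le> (\<Sum>k\<in>UNIV. norm (A$i$k * B$k$j))" by (rule norm_sum)
    then show "norm ((\<chi> i j. \<Sum>k\<in>UNIV. A$i$k * B$k$j) $ i $ j) \<le> (\<Sum>k\<in>UNIV. norm (A$i$k) * norm (B$k$j))"
      by (simp add: norm_mult)
  qed
  also have "\<dots> = (\<Sum>i\<in>UNIV. \<Sum>k\<in>UNIV. \<Sum>j\<in>UNIV. norm (A$i$k) * norm (B$k$j))"
    by (rule sum.cong[OF refl], rule sum.swap)
  also have "\<dots> = (\<Sum>i\<in>UNIV. \<Sum>k\<in>UNIV. norm (A$i$k) * (\<Sum>j\<in>UNIV. norm (B$k$j)))"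
    by (simp add: sum_distrib_left)
  also have "\<dots> \<le> (\<Sum>i\<in>UNIV. \<Sum>k\<in>UNIV. norm (A$i$k) * mu B)"
    unfolding mu_def
    by (intro sum_mono mult_left_mono member_le_sum) (auto intro: sum_nonneg)
  also have "\<dots> = mu A * mu B" unfolding mu_def by (simp add: sum_distrib_right)
  finally show ?thesis .
qed

lemma mu_pow: fixes A :: "complex^'n^'n" shows "mu (mat_pow A k) \<le> mu (mat 1 :: complex^'n^'n) * mu A ^ k"
proof (induction k)
  case 0 then show ?case by simp
next
  case (Suc k)
  have "mu (mat_pow A (Suc k)) \<le> mu A * mu (mat_pow A k)" using mu_mult by simp
  also have "\<dots> \<le> mu A * (mu (mat 1 :: complex^'n^'n) * mu A ^ k)"
    by (intro mult_left_mono Suc mu_nonneg)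
  finally show ?case by (simp add: algebra_simps)
qed

lemma exp_summable: fixes A :: "complex^'n^'n" shows "summable (\<lambda>k. (1 / fact k) *\<^sub>R mat_pow A k)"
proof (rule summable_comparison_test)
  show "summable (\<lambda>k. mu (mat 1 :: complex^'n^'n) * (inverse (fact k) * mu A ^ k))"
    by (intro summable_mult summable_exp)
  show "\<exists>N. \<forall>n\<ge>N. norm ((1 / fact n) *\<^sub>R mat_pow A n)
     \<le> mu (mat 1 :: complex^'n^'n) * (inverse (fact n) * mu A ^ n)"
  proof (intro exI allI impI)
    fix n :: nat
    have "norm ((1 / fact n) *\<^sub>R mat_pow A n) = inverse (fact n) * norm (mat_pow A n)"
      by (simp add: divide_inverse)
    also have "\<dots> \<le> inverse (fact n) * (mu (mat 1 :: complex^'n^'n) * mu A ^ n)"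
      by (intro mult_left_mono order_trans[OF norm_le_mu mu_pow]) auto
    finally show "norm ((1 / fact n) *\<^sub>R mat_pow A n)
     \<le> mu (mat 1 :: complex^'n^'n) * (inverse (fact n) * mu A ^ n)" by (simp add: algebra_simps)
  qed
qed

lemma exp_lin:
  fixes f :: "complex^'n^'n \<Rightarrow> complex^'n^'n"
  assumes bl: "bounded_linear f" and p: "\<And>k. f (mat_pow A k) = mat_pow B k"
  shows "f (mat_exp A) = mat_exp B"
proof -
  have "f (mat_exp A) = (\<Sum>k. f ((1 / fact k) *\<^sub>R mat_pow A k))"
    unfolding mat_exp_def by (rule bounded_linear.suminf[OF bl exp_summable])
  also have "\<dots> = mat_exp B" unfolding mat_exp_def
    using linear.scaleR[OF bounded_linear.linear[OF bl]] p by simp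
  finally show ?thesis .
qed

lemma my_rdistrib: "(B + C) ** (A::complex^'n^'k) = B ** A + C ** A"
  by (simp add: matrix_matrix_mult_def vec_eq_iff distrib_right sum.distrib)

lemma sim_lin:
  fixes T Ti :: "complex^'n^'n"
  shows "bounded_linear (\<lambda>X. T ** X ** Ti)"
  by (intro linear_conv_bounded_linear[THEN iffD1] linearI)
     (simp_all add: matrix_add_ldistrib my_rdistrib scalar_matrix_assoc matrix_scalar_ac)


lemma sim_lin_rules:
  fixes T Ti :: "complex^'n^'n"
  shows "T ** (X + Y) ** Ti = T ** X ** Ti + T ** Y ** Ti"
    "T ** (X - Y) ** Ti = T ** X ** Ti - T ** Y ** Ti"
    "T ** (- X) ** Ti = - (T ** X ** Ti)"
    "T ** (r *\<^sub>R X) ** Ti = r *\<^sub>R (T ** X ** Ti)"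
  using linear_add[OF bounded_linear.linear[OF sim_lin[of T Ti]]]
    linear_diff[OF bounded_linear.linear[OF sim_lin[of T Ti]]]
    linear_neg[OF bounded_linear.linear[OF sim_lin[of T Ti]]]
    linear_scale[OF bounded_linear.linear[OF sim_lin[of T Ti]]]
  by auto

lemma exp_sim:
  fixes T Ti A :: "complex^'n^'n"
  assumes "Ti ** T = mat 1"
  shows "mat_exp (T ** A ** Ti) = T ** mat_exp A ** Ti"
  using exp_lin[OF sim_lin[of T Ti], of A "T ** A ** Ti"] sim_pow[OF assms] by simp

lemma inv_sim:
  fixes T Ti S :: "complex^'n^'n"
  assumes "Ti ** T = mat 1" "T ** Ti = mat 1" "invertible S"
  shows "matrix_inv (T ** S ** Ti) = T ** matrix_inv S ** Ti"
proof (rule inv_unique)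
  have "T ** matrix_inv S ** Ti ** (T ** S ** Ti) = T ** (matrix_inv S ** (Ti ** T) ** S) ** Ti"
    by (simp add: matrix_mul_assoc)
  also have "\<dots> = mat 1" using assms inv_props[OF assms(3)] by (simp add: matrix_mul_assoc)
  finally show "T ** matrix_inv S ** Ti ** (T ** S ** Ti) = mat 1" .
qed

lemma xi_adj:
  fixes S T Ti :: "complex^'n^'n"
  assumes TiT: "Ti ** T = mat 1" and TTi: "T ** Ti = mat 1" and Si: "invertible S"
    and aS: "adjoint S = T ** S ** Ti"
  shows "adjoint (Xi S x y) = T ** Xi S x y ** Ti"
proof -
  have "matrix_inv (adjoint S) = adjoint (matrix_inv S)"
    by (rule inv_unique) (simp add: adj_mult[symmetric] inv_props[OF Si] adj_mat1)
  then have aSi: "adjoint (matrix_inv S) = T ** matrix_inv S ** Ti"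
    using inv_sim[OF TiT TTi Si] aS by simp
  have bl: "bounded_linear (adjoint :: complex^'n^'n \<Rightarrow> _)"
    by (intro linear_conv_bounded_linear[THEN iffD1] linear_adj)
  have "adjoint (Xi S x y) = mat_exp (adjoint (- (x *\<^sub>R S) - (y *\<^sub>R matrix_inv S)))"
    unfolding Xi_def by (rule exp_lin[OF bl adj_pow])
  also have "adjoint (- (x *\<^sub>R S) - (y *\<^sub>R matrix_inv S))
     = T ** (- (x *\<^sub>R S) - (y *\<^sub>R matrix_inv S)) ** Ti"
    by (simp add: adj_diff adj_minus adj_scaleR aS aSi sim_lin_rules)
  also have "mat_exp \<dots> = T ** Xi S x y ** Ti" unfolding Xi_def by (rule exp_sim[OF TiT])
  finally show ?thesis .
qed

lemma xi_conj:
  fixes S T Ti :: "complex^'n^'n"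
  assumes TiT: "Ti ** T = mat 1" and TTi: "T ** Ti = mat 1" and Si: "invertible S"
    and aS: "mconj S = T ** S ** Ti"
  shows "mconj (Xi S x y) = T ** Xi S x y ** Ti"
proof -
  have "matrix_inv (mconj S) = mconj (matrix_inv S)"
    by (rule inv_unique) (simp add: mconj_mult[symmetric] inv_props[OF Si] mconj_mat1)
  then have aSi: "mconj (matrix_inv S) = T ** matrix_inv S ** Ti"
    using inv_sim[OF TiT TTi Si] aS by simp
  have bl: "bounded_linear (mconj :: complex^'n^'n \<Rightarrow> _)"
    by (intro linear_conv_bounded_linear[THEN iffD1] linear_mconj)
  have "mconj (Xi S x y) = mat_exp (mconj (- (x *\<^sub>R S) - (y *\<^sub>R matrix_inv S)))"
    unfolding Xi_def by (rule exp_lin[OF bl mconj_pow])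
  also have "mconj (- (x *\<^sub>R S) - (y *\<^sub>R matrix_inv S))
     = T ** (- (x *\<^sub>R S) - (y *\<^sub>R matrix_inv S)) ** Ti"
    by (simp add: mconj_diff mconj_minus mconj_scaleR aS aSi sim_lin_rules)
  also have "mat_exp \<dots> = T ** Xi S x y ** Ti" unfolding Xi_def by (rule exp_sim[OF TiT])
  finally show ?thesis .
qed


lemma push_lemma:
  fixes Z N M W Y :: "complex^'n^'n"
  assumes "Z ** N = mat 1" "M ** W = mat 1" "Y ** M = N ** Y"
  shows "Z ** Y = Y ** W"
proof -
  have "Z ** Y = Z ** Y ** (M ** W)" using assms by simp
  also have "\<dots> = Z ** (Y ** M) ** W" by (simp add: matrix_mul_assoc)
  also have "\<dots> = (Z ** N) ** Y ** W" by (simp add: assms matrix_mul_assoc)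
  finally show ?thesis using assms by simp
qed

lemma herm_qp:
  fixes Xm K T Ti W :: "complex^'M^'M" and U :: "complex^'M^'m" and V :: "complex^'m^'M"
  assumes TiT: "Ti ** T = mat 1" and TTi: "T ** Ti = mat 1"
    and aX: "adjoint Xm = T ** Xm ** Ti" and aK: "adjoint K = T ** K ** Ti"
    and aV: "adjoint V = U ** Ti" and aU: "adjoint U = T ** V"
    and MW: "(mat 1 + K ** Xm ** (K ** Xm)) ** W = mat 1"
  shows "adjoint (U ** Xm ** W ** V) = U ** Xm ** W ** V"
    "adjoint (U ** Xm ** K ** Xm ** W ** V) = U ** Xm ** K ** Xm ** W ** V"
proof -
  have c1: "X ** Ti ** T = X" for X :: "complex^'M^'k"
    by (simp add: TiT flip: matrix_mul_assoc)
  have c2: "X ** T ** Ti = X" for X :: "complex^'M^'k"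
    by (simp add: TTi flip: matrix_mul_assoc)
  define M where "M = mat 1 + K ** Xm ** (K ** Xm)"
  define N where "N = mat 1 + Xm ** K ** (Xm ** K)"
  define Z where "Z = Ti ** adjoint W ** T"
  have aM: "adjoint M = T ** N ** Ti"
    unfolding M_def N_def
    by (simp add: adj_add adj_mult adj_mat1 aX aK matrix_add_ldistrib my_rdistrib matrix_mul_assoc c1 TTi)
  have "adjoint W ** adjoint M = mat 1"
    using arg_cong[OF MW[folded M_def], of adjoint] by (simp add: adj_mult adj_mat1)
  then have e: "adjoint W ** T ** N ** Ti = mat 1" by (simp add: aM matrix_mul_assoc)
  have ZN: "Z ** N = mat 1"
  proof -
    have "Z ** N = Ti ** (adjoint W ** T ** N ** Ti) ** T" unfolding Z_def
      by (simp add: matrix_mul_assoc c1)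
    then show ?thesis using e TiT by simp
  qed
  have MW': "M ** W = mat 1" using MW M_def by simp
  have p1: "Z ** Xm = Xm ** W"
    by (rule push_lemma[OF ZN MW']) (simp add: M_def N_def matrix_add_ldistrib my_rdistrib matrix_mul_assoc)
  have p2: "Z ** (Xm ** K ** Xm) = (Xm ** K ** Xm) ** W"
    by (rule push_lemma[OF ZN MW']) (simp add: M_def N_def matrix_add_ldistrib my_rdistrib matrix_mul_assoc)
  have "adjoint (U ** Xm ** W ** V) = U ** (Z ** Xm) ** V"
    unfolding Z_def by (simp add: adj_mult aX aV aU matrix_mul_assoc c1)
  then show "adjoint (U ** Xm ** W ** V) = U ** Xm ** W ** V"
    by (simp add: p1 matrix_mul_assoc)
  have hthat: "adjoint (U ** Xm ** K ** Xm ** W ** V) = U ** (Z ** (Xm ** K ** Xm)) ** V"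
    unfolding Z_def by (simp add: adj_mult aX aK aV aU matrix_mul_assoc c1)
  show "adjoint (U ** Xm ** K ** Xm ** W ** V) = U ** Xm ** K ** Xm ** W ** V"
  proof -
    have "U ** (Z ** (Xm ** K ** Xm)) ** V = U ** ((Xm ** K ** Xm) ** W) ** V" using p2 by simp
    with hthat show ?thesis by (simp add: matrix_mul_assoc)
  qed
qed

lemma conj_qp:
  fixes Xm K T Ti W :: "complex^'M^'M" and U :: "complex^'M^'m" and V :: "complex^'m^'M"
  assumes TiT: "Ti ** T = mat 1" and TTi: "T ** Ti = mat 1"
    and aX: "mconj Xm = T ** Xm ** Ti" and aK: "mconj K = T ** K ** Ti"
    and aV: "mconj V = T ** V" and aU: "mconj U = U ** Ti"
    and MW: "(mat 1 + K ** Xm ** (K ** Xm)) ** W = mat 1"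
  shows "mconj (U ** Xm ** W ** V) = U ** Xm ** W ** V"
    "mconj (U ** Xm ** K ** Xm ** W ** V) = U ** Xm ** K ** Xm ** W ** V"
proof -
  have c1: "X ** Ti ** T = X" for X :: "complex^'M^'k"
    by (simp add: TiT flip: matrix_mul_assoc)
  have c2: "X ** T ** Ti = X" for X :: "complex^'M^'k"
    by (simp add: TTi flip: matrix_mul_assoc)
  define M where "M = mat 1 + K ** Xm ** (K ** Xm)"
  define Z where "Z = Ti ** mconj W ** T"
  have aM: "mconj M = T ** M ** Ti"
    unfolding M_def
    by (simp add: mconj_add mconj_mult mconj_mat1 aX aK matrix_add_ldistrib my_rdistrib matrix_mul_assoc c1 TTi)
  have MW': "M ** W = mat 1" using MW M_def by simp
  then have WM: "W ** M = mat 1" using matrix_left_right_inverse by blast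
  have "mconj W ** mconj M = mat 1"
    using arg_cong[OF WM, of mconj] by (simp add: mconj_mult mconj_mat1)
  then have e: "mconj W ** T ** M ** Ti = mat 1" by (simp add: aM matrix_mul_assoc)
  have ZM: "Z ** M = mat 1"
  proof -
    have "Z ** M = Ti ** (mconj W ** T ** M ** Ti) ** T" unfolding Z_def
      by (simp add: matrix_mul_assoc c1)
    then show ?thesis using e TiT by simp
  qed
  have ZW: "Z = W"
  proof -
    have "Z = Z ** (M ** W)" using MW' by simp
    also have "\<dots> = W" by (simp add: matrix_mul_assoc ZM)
    finally show ?thesis .
  qed
  have "mconj (U ** Xm ** W ** V) = U ** Xm ** Z ** V"
    unfolding Z_def by (simp add: mconj_mult aX aV aU matrix_mul_assoc c1)
  then show "mconj (U ** Xm ** W ** V) = U ** Xm ** W ** V" by (simp add: ZW)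
  have "mconj (U ** Xm ** K ** Xm ** W ** V) = U ** Xm ** K ** Xm ** Z ** V"
    unfolding Z_def by (simp add: mconj_mult aX aK aV aU matrix_mul_assoc c1)
  then show "mconj (U ** Xm ** K ** Xm ** W ** V) = U ** Xm ** K ** Xm ** W ** V" by (simp add: ZW)
qed


lemma cancel_r:
  fixes Ti T :: "complex^'M^'M"
  assumes "Ti ** T = mat 1"
  shows "X ** Ti ** T = X"
  by (simp add: assms flip: matrix_mul_assoc)

lemma ms1: "(S::complex^'n^'k) ** (r *\<^sub>R X) = r *\<^sub>R (S ** X)"
  by (simp add: matrix_matrix_mult_def vec_eq_iff scaleR_sum_right mult_ac)
lemma ms2: "(r *\<^sub>R X) ** (S::complex^'n^'k) = r *\<^sub>R (X ** S)"
  by (simp add: matrix_matrix_mult_def vec_eq_iff scaleR_sum_right mult_ac)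

lemma sylv_sym:
  fixes S K0 L T Ti :: "complex^'M^'M" and U :: "complex^'M^'m" and V :: "complex^'m^'M"
  assumes TiT: "Ti ** T = mat 1" and TTi: "T ** Ti = mat 1"
    and eq: "S ** K0 + K0 ** S = V ** U"
    and eqL: "L ** T ** S ** Ti + T ** S ** Ti ** L = T ** V ** U ** Ti"
  shows "S ** ((1/2) *\<^sub>R (K0 + Ti ** L ** T)) + ((1/2) *\<^sub>R (K0 + Ti ** L ** T)) ** S = V ** U"
proof -
  have c1: "X ** Ti ** T = X" for X :: "complex^'M^'k"
    by (simp add: TiT flip: matrix_mul_assoc)
  have "Ti ** (L ** T ** S ** Ti + T ** S ** Ti ** L) ** T = Ti ** (T ** V ** U ** Ti) ** T"
    using eqL by simp
  then have E: "S ** (Ti ** L ** T) + (Ti ** L ** T) ** S = V ** U"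
    by (simp add: matrix_add_ldistrib my_rdistrib matrix_mul_assoc c1 TiT add.commute)
  have "S ** ((1/2) *\<^sub>R (K0 + Ti ** L ** T)) + ((1/2) *\<^sub>R (K0 + Ti ** L ** T)) ** S
     = (1/2) *\<^sub>R ((S ** K0 + K0 ** S) + (S ** (Ti ** L ** T) + (Ti ** L ** T) ** S))"
    by (simp add: ms1 ms2 matrix_add_ldistrib my_rdistrib scaleR_add_right algebra_simps)
  also have "\<dots> = V ** U" using eq E by (simp add: scaleR_2[symmetric])
  finally show ?thesis .
qed

theorem proposition2:
  fixes S T :: "complex^'M^'M" and U :: "complex^'M^'m" and V :: "complex^'m^'M"
  assumes S_inv: "invertible S"
    and T_inv: "invertible T"
    and sylv: "\<exists>K. S ** K + K ** S = V ** U"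
  shows
   "(adjoint T = T \<and> adjoint S = T ** S ** matrix_inv T \<and> U = adjoint V ** T \<longrightarrow>
      (\<exists>K. S ** K + K ** S = V ** U \<and> adjoint K = T ** K ** matrix_inv T) \<and>
      (\<forall>K (p0 :: complex^'m^'m) x y.
         S ** K + K ** S = V ** U \<and> adjoint K = T ** K ** matrix_inv T \<and> adjoint p0 = p0 \<and>
         invertible (mat 1 + (K ** Xi S x y) ** (K ** Xi S x y)) \<longrightarrow>
           adjoint (qsol S U V K x y) = qsol S U V K x y \<and>
           adjoint (psol p0 S U V K x y) = psol p0 S U V K x y))
    \<and>
    (mconj T = matrix_inv T \<and> mconj S = T ** S ** matrix_inv T \<and>
     mconj U = U ** matrix_inv T \<and> mconj V = T ** V \<longrightarrow>
      (\<exists>K. S ** K + K ** S = V ** U \<and> mconj K = T ** K ** matrix_inv T) \<and>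
      (\<forall>K (p0 :: complex^'m^'m) x y.
         S ** K + K ** S = V ** U \<and> mconj K = T ** K ** matrix_inv T \<and> mconj p0 = p0 \<and>
         invertible (mat 1 + (K ** Xi S x y) ** (K ** Xi S x y)) \<longrightarrow>
           mconj (qsol S U V K x y) = qsol S U V K x y \<and>
           mconj (psol p0 S U V K x y) = psol p0 S U V K x y))"
proof -
  define Ti where "Ti = matrix_inv T"
  have TTi: "T ** Ti = mat 1" and TiT: "Ti ** T = mat 1"
    using inv_props[OF T_inv] Ti_def by auto
  note c1 = cancel_r[OF TiT]
  note c2 = cancel_r[OF TTi]
  obtain K0 where K0: "S ** K0 + K0 ** S = V ** U" using sylv by blast
  have part1: "(\<exists>K. S ** K + K ** S = V ** U \<and> adjoint K = T ** K ** Ti) \<and>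
      (\<forall>K (p0 :: complex^'m^'m) x y.
         S ** K + K ** S = V ** U \<and> adjoint K = T ** K ** Ti \<and> adjoint p0 = p0 \<and>
         invertible (mat 1 + (K ** Xi S x y) ** (K ** Xi S x y)) \<longrightarrow>
           adjoint (qsol S U V K x y) = qsol S U V K x y \<and>
           adjoint (psol p0 S U V K x y) = psol p0 S U V K x y)"
    if aT: "adjoint T = T" and aS: "adjoint S = T ** S ** Ti" and hU: "U = adjoint V ** T"
  proof
    have aV: "adjoint V = U ** Ti" by (simp add: hU c2)
    have aU: "adjoint U = T ** V" using hU by (simp add: adj_mult aT adj_adj)
    have aTi: "adjoint Ti = Ti"
    proof -
      have "T ** adjoint Ti = mat 1"
        using arg_cong[OF TiT, of adjoint] by (simp add: adj_mult adj_mat1 aT)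
      then have "Ti ** (T ** adjoint Ti) = Ti" by simp
      then show ?thesis by (simp add: matrix_mul_assoc TiT)
    qed
    let ?K = "(1/2) *\<^sub>R (K0 + Ti ** adjoint K0 ** T)"
    have eqL: "adjoint K0 ** T ** S ** Ti + T ** S ** Ti ** adjoint K0 = T ** V ** U ** Ti"
      using arg_cong[OF K0, of adjoint]
      by (simp add: adj_add adj_mult aS aU aV matrix_mul_assoc)
    have "S ** ?K + ?K ** S = V ** U" by (rule sylv_sym[OF TiT TTi K0 eqL])
    moreover have "adjoint ?K = T ** ?K ** Ti"
      by (simp add: adj_scaleR adj_add adj_mult aT aTi adj_adj sim_lin_rules matrix_mul_assoc TTi c2 add.commute)
    ultimately show "\<exists>K. S ** K + K ** S = V ** U \<and> adjoint K = T ** K ** Ti" by blast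
  next
    show "\<forall>K (p0 :: complex^'m^'m) x y.
         S ** K + K ** S = V ** U \<and> adjoint K = T ** K ** Ti \<and> adjoint p0 = p0 \<and>
         invertible (mat 1 + (K ** Xi S x y) ** (K ** Xi S x y)) \<longrightarrow>
           adjoint (qsol S U V K x y) = qsol S U V K x y \<and>
           adjoint (psol p0 S U V K x y) = psol p0 S U V K x y"
    proof (intro allI impI, elim conjE)
      fix K x y and p0 :: "complex^'m^'m"
      assume aK: "adjoint K = T ** K ** Ti" and ap: "adjoint p0 = p0"
        and inv: "invertible (mat 1 + (K ** Xi S x y) ** (K ** Xi S x y))"
      have aV: "adjoint V = U ** Ti" by (simp add: hU c2)
      have aU: "adjoint U = T ** V" using hU by (simp add: adj_mult aT adj_adj)
      note h = herm_qp[OF TiT TTi xi_adj[OF TiT TTi S_inv aS] aK aV aU inv_props(1)[OF inv]]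
      show "adjoint (qsol S U V K x y) = qsol S U V K x y \<and>
           adjoint (psol p0 S U V K x y) = psol p0 S U V K x y"
        unfolding qsol_def psol_def using h by (simp add: adj_diff ap)
    qed
  qed
  have part2: "(\<exists>K. S ** K + K ** S = V ** U \<and> mconj K = T ** K ** Ti) \<and>
      (\<forall>K (p0 :: complex^'m^'m) x y.
         S ** K + K ** S = V ** U \<and> mconj K = T ** K ** Ti \<and> mconj p0 = p0 \<and>
         invertible (mat 1 + (K ** Xi S x y) ** (K ** Xi S x y)) \<longrightarrow>
           mconj (qsol S U V K x y) = qsol S U V K x y \<and>
           mconj (psol p0 S U V K x y) = psol p0 S U V K x y)"
    if aT: "mconj T = Ti" and aS: "mconj S = T ** S ** Ti" and aU: "mconj U = U ** Ti"
      and aV: "mconj V = T ** V"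
  proof
    have aTi: "mconj Ti = T"
    proof -
      have "mconj Ti ** Ti = mat 1"
        using arg_cong[OF TiT, of mconj] by (simp add: mconj_mult mconj_mat1 aT)
      then have "mconj Ti ** Ti ** T = T" by simp
      then show ?thesis by (simp add: c1)
    qed
    let ?K = "(1/2) *\<^sub>R (K0 + Ti ** mconj K0 ** T)"
    have eqL: "mconj K0 ** T ** S ** Ti + T ** S ** Ti ** mconj K0 = T ** V ** U ** Ti"
      using arg_cong[OF K0, of mconj]
      by (simp add: mconj_add mconj_mult aS aU aV matrix_mul_assoc add.commute)
    have "S ** ?K + ?K ** S = V ** U" by (rule sylv_sym[OF TiT TTi K0 eqL])
    moreover have "mconj ?K = T ** ?K ** Ti"
      by (simp add: mconj_scaleR mconj_add mconj_mult aT aTi mconj_mconj sim_lin_rules matrix_mul_assoc TTi c2 add.commute)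
    ultimately show "\<exists>K. S ** K + K ** S = V ** U \<and> mconj K = T ** K ** Ti" by blast
  next
    show "\<forall>K (p0 :: complex^'m^'m) x y.
         S ** K + K ** S = V ** U \<and> mconj K = T ** K ** Ti \<and> mconj p0 = p0 \<and>
         invertible (mat 1 + (K ** Xi S x y) ** (K ** Xi S x y)) \<longrightarrow>
           mconj (qsol S U V K x y) = qsol S U V K x y \<and>
           mconj (psol p0 S U V K x y) = psol p0 S U V K x y"
    proof (intro allI impI, elim conjE)
      fix K x y and p0 :: "complex^'m^'m"
      assume aK: "mconj K = T ** K ** Ti" and ap: "mconj p0 = p0"
        and inv: "invertible (mat 1 + (K ** Xi S x y) ** (K ** Xi S x y))"
      note h = conj_qp[OF TiT TTi xi_conj[OF TiT TTi S_inv aS] aK aV aU inv_props(1)[OF inv]]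
      show "mconj (qsol S U V K x y) = qsol S U V K x y \<and>
           mconj (psol p0 S U V K x y) = psol p0 S U V K x y"
        unfolding qsol_def psol_def using h by (simp add: mconj_diff ap)
    qed
  qed
  show ?thesis using part1 part2 unfolding Ti_def by blast
qed

end
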